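(* Let $k\ge 3$ and $A\in\mathcal{M}_d$. Then $$\operatorname{tr}_1\big[(1\,2\cdots k)^{T_k}(A\otimes\mathbb{1}^{\otimes(k-1)})\big]=\Big(\cdots\big((A\otimes\mathbb{1}^{\otimes(k-2)})^{R_{k-1,k-2}}\big)^{R_{k-1,k-3}}\cdots\Big)^{R_{k-1,1}},$$ i.e. the reshufflings $R_{k-1,k-2},R_{k-1,k-3},\dots,R_{k-1,1}$ are applied successively, in this order, to $A\otimes\mathbb{1}^{\otimes(k-2)}\in\mathcal{M}_d^{\otimes(k-1)}$.
   Context: $\mathcal{M}_d$ denotes complex $d\times d$ matrices; $\{|i\rangle\}$ is a fixed orthonormal basis of $\mathbb{C}^d$. A permutation $\sigma\in S_k$ acts on $(\mathbb{C}^d)^{\otimes k}$ by $\sigma|v_1\rangle\otimes\cdots\otimes|v_k\rangle=|v_{\sigma^{-1}(1)}\rangle\otimes\cdots\otimes|v_{\sigma^{-1}(k)}\rangle$; $(1\,2\cdots k)$ is the cycle $1\to2\to\cdots\to k\to1$. $T_k$ is the partial transpose on the $k$-th factor in the basis $\{|i\rangle\}$; $\operatorname{tr}_1$ is the partial trace over the first factor. Reshuffling of sites $a,b$ on $\mathcal{M}_d^{\otimes n}$: $R_{a,b}$ is the linear map defined on basis elements by sending $|i_1\dots i_n\rangle\langle j_1\dots j_n|$ to the operator obtained by exchanging the $a$-th ket index $i_a$ with the $b$-th bra index $j_b$, i.e. the new $a$-th ket index is $j_b$ and the new $b$-th bra index is $i_a$, all other indices unchanged. *)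

theory Defs
  imports Complex_Main
begin

text \<open>An operator on (C^d)^{\<otimes>n} is represented by its matrix entries
  X i j = <i_1...i_n| X |j_1...j_n>, where the multi-indices are lists of
  length n with entries < d (list position m-1 holds the index of site m).\<close>

type_synonym op = "nat list \<Rightarrow> nat list \<Rightarrow> complex"

definition idx :: "nat \<Rightarrow> nat \<Rightarrow> nat list set" where
  "idx d n = {l. length l = n \<and> (\<forall>x\<in>set l. x < d)}"

definition op_mult :: "nat \<Rightarrow> nat \<Rightarrow> op \<Rightarrow> op \<Rightarrow> op" where
  "op_mult d n X Y = (\<lambda>i j. \<Sum>l\<in>idx d n. X i l * Y l j)"

text \<open>Permutation operator of sigma (on sites 1..k):
  sigma |v_1..v_k> = |v_{sigma^-1(1)} .. v_{sigma^-1(k)}>, i.e.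
  <i|sigma|j> = 1 iff i_{sigma(m)} = j_m for all m.\<close>
definition perm_op :: "nat \<Rightarrow> (nat \<Rightarrow> nat) \<Rightarrow> op" where
  "perm_op k \<sigma> = (\<lambda>i j. if \<forall>m\<in>{1..k}. i ! (\<sigma> m - 1) = j ! (m - 1) then 1 else 0)"

definition cycle :: "nat \<Rightarrow> nat \<Rightarrow> nat" where
  "cycle k m = (if m = k then 1 else m + 1)"

definition ptrans :: "nat \<Rightarrow> op \<Rightarrow> op" where
  "ptrans s X = (\<lambda>i j. X (i[s - 1 := j ! (s - 1)]) (j[s - 1 := i ! (s - 1)]))"

definition ptrace1 :: "nat \<Rightarrow> op \<Rightarrow> op" where
  "ptrace1 d X = (\<lambda>i j. \<Sum>a<d. X (a # i) (a # j))"

definition tensor_id :: "(nat \<Rightarrow> nat \<Rightarrow> complex) \<Rightarrow> op" where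
  "tensor_id A = (\<lambda>i j. A (hd i) (hd j) * (if tl i = tl j then 1 else 0))"

text \<open>Reshuffling R_{a,b}: |i><j| is sent to the operator whose a-th ket index is j_b
  and whose b-th bra index is i_a. On matrix entries this reads as follows.\<close>
definition reshuffle :: "nat \<Rightarrow> nat \<Rightarrow> op \<Rightarrow> op" where
  "reshuffle a b X = (\<lambda>i j. X (i[a - 1 := j ! (b - 1)]) (j[b - 1 := i ! (a - 1)]))"

end

theory Submission imports Defs begin

lemma fold_resh:
  assumes "1 \<le> p" "p \<le> n - 1" "length i = n" "length j = n"
  shows "foldl (\<lambda>X b. reshuffle n b X) X (rev [1..<Suc p]) i j
       = X (i[n-1 := j!(p-1)]) (i!(n-1) # take (p-1) j @ drop p j)"
  using assms
proof (induction p arbitrary: X rule: nat_induct_at_least)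
  case base
  then show ?case by (cases j) (auto simp: reshuffle_def)
next
  case (Suc p)
  have r: "rev [1..<Suc (Suc p)] = Suc p # rev [1..<Suc p]" by simp
  have "foldl (\<lambda>X b. reshuffle n b X) X (rev [1..<Suc (Suc p)]) i j
     = foldl (\<lambda>X b. reshuffle n b X) (reshuffle n (Suc p) X) (rev [1..<Suc p]) i j"
    by (simp only: r foldl_Cons)
  also have "\<dots> = reshuffle n (Suc p) X (i[n-1 := j!(p-1)]) (i!(n-1) # take (p-1) j @ drop p j)"
    using Suc by simp
  also have "\<dots> = X (i[n-1 := j!p]) (i!(n-1) # take p j @ drop (Suc p) j)"
  proof -
    have e1: "(i!(n-1) # take (p-1) j @ drop p j) ! p = j ! p"
      using Suc by (cases p) (auto simp: nth_append)
    have e2: "(i[n-1 := j!(p-1)]) ! (n-1) = j!(p-1)" using Suc by simp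
    have e3: "(i!(n-1) # take (p-1) j @ drop p j)[p := j!(p-1)] = i!(n-1) # take p j @ drop (Suc p) j"
    proof -
      obtain q where q: "p = Suc q" using Suc by (cases p) auto
      have lt: "p < length j" using Suc by simp
      have d: "drop p j = j!p # drop (Suc p) j" using lt by (simp add: Cons_nth_drop_Suc)
      have t: "take p j = take q j @ [j!q]" using lt q by (simp add: take_Suc_conv_app_nth)
      have lq: "length (take q j) = q" using lt q by simp
      show ?thesis unfolding q using lq d t q by (simp add: list_update_append)
    qed
    show ?thesis unfolding reshuffle_def using e1 e2 e3 by simp
  qed
  finally show ?case by simp
qed

lemma sum_tl:
  fixes f :: "nat list \<Rightarrow> complex"
  assumes "j \<in> idx d n"
  shows "(\<Sum>l\<in>idx d (Suc n). f l * (if tl l = j then 1 else 0)) = (\<Sum>c<d. f (c#j))"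
proof -
  have "(\<Sum>l\<in>idx d (Suc n). f l * (if tl l = j then 1 else 0))
      = (\<Sum>l\<in>idx d (Suc n) \<inter> {l. tl l = j}. f l)"
  proof -
    have fin: "finite (idx d (Suc n))"
    proof -
      have "idx d (Suc n) = {xs. set xs \<subseteq> {..<d} \<and> length xs = Suc n}"
        by (auto simp: idx_def)
      thus ?thesis using finite_lists_length_eq[of "{..<d}" "Suc n"] by simp
    qed
    have "idx d (Suc n) \<inter> {l. tl l = j} = {l\<in>idx d (Suc n). tl l = j}" by blast
    moreover have "(\<Sum>l\<in>idx d (Suc n). f l * (if tl l = j then 1 else 0)) = (\<Sum>l\<in>idx d (Suc n). if tl l = j then f l else 0)"
      by (rule sum.cong) auto
    ultimately show ?thesis using sum.inter_filter[OF fin, of f "\<lambda>l. tl l = j"] by simp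
  qed
  also have "idx d (Suc n) \<inter> {l. tl l = j} = (\<lambda>c. c#j) ` {..<d}"
  proof
    show "idx d (Suc n) \<inter> {l. tl l = j} \<subseteq> (\<lambda>c. c#j) ` {..<d}"
    proof
      fix l assume l: "l \<in> idx d (Suc n) \<inter> {l. tl l = j}"
      then obtain c r where "l = c # r" by (cases l) (auto simp: idx_def)
      with l show "l \<in> (\<lambda>c. c#j) ` {..<d}" by (auto simp: idx_def)
    qed
    show "(\<lambda>c. c#j) ` {..<d} \<subseteq> idx d (Suc n) \<inter> {l. tl l = j}"
      using assms by (auto simp: idx_def)
  qed
  also have "(\<Sum>l\<in>(\<lambda>c. c#j) ` {..<d}. f l) = (\<Sum>c<d. f (c#j))"
    by (subst sum.reindex) (auto simp: inj_on_def)
  finally show ?thesis .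
qed

lemma perm_char:
  assumes "length i = n" "length j = n" "n \<ge> 2"
  shows "ptrans (Suc n) (perm_op (Suc n) (cycle (Suc n))) (a#i) (c#j)
    = (if c = i!0 \<and> a = i!(n-1) \<and> (\<forall>t. 1\<le>t \<and> t<n-1 \<longrightarrow> i!t = j!(t-1)) \<and> j!(n-1) = j!(n-2) then 1 else 0)"
proof -
  define x where "x = a # i[n-1:=j!(n-1)]"
  define y where "y = c # j[n-1:=i!(n-1)]"
  have xi: "\<And>t. t < n \<Longrightarrow> x ! Suc t = (if t = n-1 then j!(n-1) else i!t)"
    using assms by (auto simp: x_def nth_list_update)
  have yi: "\<And>t. t < n \<Longrightarrow> y ! Suc t = (if t = n-1 then i!(n-1) else j!t)"
    using assms by (auto simp: y_def nth_list_update)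
  have x0: "x!0 = a" and y0: "y!0 = c" by (simp_all add: x_def y_def)
  have 1: "ptrans (Suc n) (perm_op (Suc n) (cycle (Suc n))) (a#i) (c#j) = perm_op (Suc n) (cycle (Suc n)) x y"
  proof -
    obtain q where q: "n = Suc q" using assms by (cases n) auto
    show ?thesis using assms unfolding ptrans_def x_def y_def q by simp
  qed
  have 2: "(\<forall>m\<in>{1..Suc n}. x ! (cycle (Suc n) m - 1) = y ! (m - 1)) \<longleftrightarrow>
     (c = i!0 \<and> a = i!(n-1) \<and> (\<forall>t. 1\<le>t \<and> t<n-1 \<longrightarrow> i!t = j!(t-1)) \<and> j!(n-1) = j!(n-2))"
    (is "?L \<longleftrightarrow> ?R")
  proof
    assume L: ?L
    have c1: "x ! 1 = y ! 0" using L[rule_format, of 1] assms by (simp add: cycle_def)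
    have c2: "x ! 0 = y ! n" using L[rule_format, of "Suc n"] by (simp add: cycle_def)
    have c3: "x ! Suc t = y ! t" if "1 \<le> t" "t < n" for t
      using L[rule_format, of "Suc t"] that by (simp add: cycle_def)
    have "c = i!0" using c1 xi[of 0] y0 assms by simp
    moreover have "a = i!(n-1)" using c2 x0 yi[of "n-1"] assms by simp
    moreover have "\<forall>t. 1\<le>t \<and> t<n-1 \<longrightarrow> i!t = j!(t-1)"
    proof (intro allI impI)
      fix t assume t: "1\<le>t \<and> t<n-1"
      then obtain s where s: "t = Suc s" by (cases t) auto
      show "i!t = j!(t-1)" using c3[of t] xi[of t] yi[of s] t s by simp
    qed
    moreover have "j!(n-1) = j!(n-2)"
    proof -
      obtain s where s: "n - 1 = Suc s" using assms by (cases "n-1") auto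
      have "s = n - 2" using s by simp
      thus ?thesis using c3[of "n-1"] xi[of "n-1"] yi[of s] s assms by simp
    qed
    ultimately show ?R by blast
  next
    assume R: ?R
    show ?L
    proof
      fix m assume m: "m \<in> {1..Suc n}"
      show "x ! (cycle (Suc n) m - 1) = y ! (m - 1)"
      proof (cases "m = Suc n")
        case True thus ?thesis using R x0 yi[of "n-1"] assms by (simp add: cycle_def)
      next
        case False
        then have cm: "cycle (Suc n) m - 1 = m" by (simp add: cycle_def)
        show ?thesis
        proof (cases "m = 1")
          case True thus ?thesis using cm R xi[of 0] y0 assms by simp
        next
          case False
          then obtain s where s: "m = Suc (Suc s)" using m by (cases m; cases "m-1") auto
          have sn: "Suc s < n" using m \<open>m \<noteq> Suc n\<close> s by auto
          show ?thesis
          proof (cases "Suc s = n - 1")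
            case True
            have "s = n - 2" using True by simp
            thus ?thesis using True cm s xi[of "Suc s"] yi[of s] R sn by simp
          next
            case False
            thus ?thesis using cm s xi[of "Suc s"] yi[of s] R sn by auto
          qed
        qed
      qed
    qed
  qed
  have 3: "perm_op (Suc n) (cycle (Suc n)) x y = (if c = i!0 \<and> a = i!(n-1) \<and> (\<forall>t. 1\<le>t \<and> t<n-1 \<longrightarrow> i!t = j!(t-1)) \<and> j!(n-1) = j!(n-2) then 1 else 0)"
    unfolding perm_op_def 2 by (rule refl)
  show ?thesis using 1 3 by simp
qed

lemma cond_eq:
  assumes "length i = n" "length j = n" "n \<ge> 2"
  shows "(tl (i[n-1 := j!(n-2)]) = take (n-2) j @ drop (n-1) j) \<longleftrightarrow>
    ((\<forall>t. 1\<le>t \<and> t<n-1 \<longrightarrow> i!t = j!(t-1)) \<and> j!(n-1) = j!(n-2))"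
proof -
  have "(tl (i[n-1 := j!(n-2)]) = take (n-2) j @ drop (n-1) j) \<longleftrightarrow>
     (\<forall>t<n-1. (tl (i[n-1 := j!(n-2)]))!t = (take (n-2) j @ drop (n-1) j)!t)"
  proof -
    have "n - 1 = Suc (n-2)" using assms by arith
    thus ?thesis using assms by (simp add: list_eq_iff_nth_eq)
  qed
  also have "\<dots> \<longleftrightarrow> (\<forall>t<n-1. (if t = n-2 then j!(n-2) else i!(Suc t)) = (if t < n-2 then j!t else j!(n-1)))"
  proof -
    have "\<And>t. t < n-1 \<Longrightarrow> (tl (i[n-1 := j!(n-2)]))!t = (if t = n-2 then j!(n-2) else i!(Suc t))"
      using assms by (auto simp: nth_tl nth_list_update)
    moreover have "\<And>t. t < n-1 \<Longrightarrow> (take (n-2) j @ drop (n-1) j)!t = (if t < n-2 then j!t else j!(n-1))"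
      using assms by (auto simp: nth_append)
    ultimately show ?thesis by auto
  qed
  also have "\<dots> \<longleftrightarrow> ((\<forall>t. 1\<le>t \<and> t<n-1 \<longrightarrow> i!t = j!(t-1)) \<and> j!(n-1) = j!(n-2))"
  proof
    assume H: "\<forall>t<n-1. (if t = n-2 then j!(n-2) else i!(Suc t)) = (if t < n-2 then j!t else j!(n-1))"
    have "j!(n-1) = j!(n-2)" using H[rule_format, of "n-2"] assms by simp
    moreover have "\<forall>t. 1\<le>t \<and> t<n-1 \<longrightarrow> i!t = j!(t-1)"
    proof (intro allI impI)
      fix t assume t: "1\<le>t \<and> t<n-1"
      then obtain s where s: "t = Suc s" by (cases t) auto
      have "s < n - 2" using s t by arith
      thus "i!t = j!(t-1)" using H[rule_format, of s] s t by auto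
    qed
    ultimately show "(\<forall>t. 1\<le>t \<and> t<n-1 \<longrightarrow> i!t = j!(t-1)) \<and> j!(n-1) = j!(n-2)" by blast
  next
    assume H: "(\<forall>t. 1\<le>t \<and> t<n-1 \<longrightarrow> i!t = j!(t-1)) \<and> j!(n-1) = j!(n-2)"
    show "\<forall>t<n-1. (if t = n-2 then j!(n-2) else i!(Suc t)) = (if t < n-2 then j!t else j!(n-1))"
    proof (intro allI impI)
      fix t assume t: "t < n-1"
      show "(if t = n-2 then j!(n-2) else i!(Suc t)) = (if t < n-2 then j!t else j!(n-1))"
      proof (cases "t = n-2")
        case True thus ?thesis using H by simp
      next
        case False
        hence "t < n-2" "Suc t < n - 1" using t by auto
        thus ?thesis using H False by auto
      qed
    qed
  qed
  finally show ?thesis .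
qed

theorem proposition5:
  fixes d k :: nat and A :: "nat \<Rightarrow> nat \<Rightarrow> complex"
  assumes "k \<ge> 3"
  shows "\<forall>i\<in>idx d (k - 1). \<forall>j\<in>idx d (k - 1).
    ptrace1 d (op_mult d k (ptrans k (perm_op k (cycle k))) (tensor_id A)) i j
    = foldl (\<lambda>X b. reshuffle (k - 1) b X) (tensor_id A) (rev [1..<k - 1]) i j"
proof (intro ballI)
  fix i j assume ii: "i \<in> idx d (k - 1)" and jj: "j \<in> idx d (k - 1)"
  define n where "n = k - 1"
  have kn: "k = Suc n" and n2: "n \<ge> 2" using assms by (auto simp: n_def)
  have li: "length i = n" and lj: "length j = n" using ii jj by (auto simp: idx_def n_def)
  have i0: "i!0 < d" and i1: "i!(n-1) < d" using ii n2 li by (auto simp: idx_def n_def)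
  define Q where "Q = ((\<forall>t. 1\<le>t \<and> t<n-1 \<longrightarrow> i!t = j!(t-1)) \<and> j!(n-1) = j!(n-2))"
  define P where "P = ptrans (Suc n) (perm_op (Suc n) (cycle (Suc n)))"
  have "ptrace1 d (op_mult d k (ptrans k (perm_op k (cycle k))) (tensor_id A)) i j
      = (\<Sum>a<d. \<Sum>l\<in>idx d (Suc n). (P (a#i) l * A (hd l) a) * (if tl l = j then 1 else 0))"
    unfolding ptrace1_def op_mult_def tensor_id_def kn P_def by (simp add: mult.assoc)
  also have "\<dots> = (\<Sum>a<d. \<Sum>c<d. P (a#i) (c#j) * A c a)"
    using sum_tl[OF jj[folded n_def]] by simp
  also have "\<dots> = (\<Sum>a<d. \<Sum>c<d. (if c = i!0 \<and> a = i!(n-1) \<and> Q then A c a else 0))"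
    unfolding P_def perm_char[OF li lj n2] Q_def by (intro sum.cong refl) auto
  also have "\<dots> = (\<Sum>a<d. if a = i!(n-1) \<and> Q then A (i!0) a else 0)"
    using i0 by (intro sum.cong refl) (auto simp: sum.delta')
  also have "\<dots> = (if Q then A (i!0) (i!(n-1)) else 0)"
    using i1 by (auto simp: sum.delta')
  finally have L: "ptrace1 d (op_mult d k (ptrans k (perm_op k (cycle k))) (tensor_id A)) i j = (if Q then A (i!0) (i!(n-1)) else 0)" .
  have r: "rev [1..<k - 1] = rev [1..<Suc (n-1)]" using n2 kn by simp
  have "foldl (\<lambda>X b. reshuffle (k - 1) b X) (tensor_id A) (rev [1..<k - 1]) i j
     = tensor_id A (i[n-1 := j!(n-2)]) (i!(n-1) # take (n-2) j @ drop (n-1) j)"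
    unfolding r n_def[symmetric] using fold_resh[of "n-1" n i j "tensor_id A"] n2 li lj
    by (simp add: numeral_2_eq_2)
  also have "\<dots> = A (i!0) (i!(n-1)) * (if tl (i[n-1 := j!(n-2)]) = take (n-2) j @ drop (n-1) j then 1 else 0)"
  proof -
    have ne: "i[n-1 := j!(n-2)] \<noteq> []" using n2 li by auto
    have "hd (i[n-1 := j!(n-2)]) = i!0"
      using ne n2 li by (simp add: hd_conv_nth nth_list_update_neq)
    thus ?thesis by (simp add: tensor_id_def)
  qed
  also have "\<dots> = (if Q then A (i!0) (i!(n-1)) else 0)"
    unfolding cond_eq[OF li lj n2] Q_def by auto
  finally show "ptrace1 d (op_mult d k (ptrans k (perm_op k (cycle k))) (tensor_id A)) i j
    = foldl (\<lambda>X b. reshuffle (k - 1) b X) (tensor_id A) (rev [1..<k - 1]) i j" using L by simp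
qed

end
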